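(* For each integer $r\ge1$, let $G_r=(K_2\cup(2r+1)K_1)\nabla(2r+1)K_1$ and $G'_r=(2r+1)K_1\nabla(2r+2)K_1\nabla K_1$, both of order $4r+4$. Then $LE(G_r)=LE(G'_r)=LE(K_{4r+4})=8r+6$ (both are $L$-borderenergetic), and neither $G_r$ nor $G'_r$ has the same Laplacian spectrum as $K_{4r+4}$.
   Context: All graphs are finite, simple and undirected. The Laplacian matrix of $G$ is $L(G)=D-A$ ($D$ degree matrix, $A$ adjacency matrix). For a graph $G$ on $n$ vertices with Laplacian eigenvalues $\mu_1,\dots,\mu_n$ and average degree $\overline d = 2|E(G)|/n$, the Laplacian energy is $LE(G)=\sum_{i=1}^n|\mu_i-\overline d|$. One has $LE(K_n)=2n-2$. A graph $G$ on $n$ vertices is $L$-borderenergetic if $LE(G)=LE(K_n)$. $K_m$ is the complete graph on $m$ vertices, $mG$ is the disjoint union of $m$ copies of $G$, $\cup$ is disjoint union, and the join $G_1\nabla G_2$ is obtained from $G_1\cup G_2$ by adding all edges between a vertex of $G_1$ and a vertex of $G_2$ (the join is associative). *)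

theory Defs
  imports "Jordan_Normal_Form.Char_Poly"
begin

text \<open>A finite simple graph is represented by its gorder n and an adjacency
  predicate on the vertex set {0..<n}; only pairs i, j < n with i \<noteq> j matter.\<close>

type_synonym graph = "nat \<times> (nat \<Rightarrow> nat \<Rightarrow> bool)"

definition gorder :: "graph \<Rightarrow> nat" where "gorder G = fst G"

definition adj :: "graph \<Rightarrow> nat \<Rightarrow> nat \<Rightarrow> bool" where
  "adj G i j \<longleftrightarrow> i < fst G \<and> j < fst G \<and> i \<noteq> j \<and> snd G i j"

definition complete :: "nat \<Rightarrow> graph" where
  "complete m = (m, \<lambda>i j. i \<noteq> j)"

definition empty_graph :: "nat \<Rightarrow> graph" where
  "empty_graph m = (m, \<lambda>i j. False)"

definition disj_union :: "graph \<Rightarrow> graph \<Rightarrow> graph" where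
  "disj_union G H = (gorder G + gorder H, \<lambda>i j.
     if i < gorder G \<and> j < gorder G then adj G i j
     else if gorder G \<le> i \<and> gorder G \<le> j then adj H (i - gorder G) (j - gorder G)
     else False)"

definition join :: "graph \<Rightarrow> graph \<Rightarrow> graph" where
  "join G H = (gorder G + gorder H, \<lambda>i j.
     if i < gorder G \<and> j < gorder G then adj G i j
     else if gorder G \<le> i \<and> gorder G \<le> j then adj H (i - gorder G) (j - gorder G)
     else True)"

definition degree :: "graph \<Rightarrow> nat \<Rightarrow> nat" where
  "degree G i = card {j. j < gorder G \<and> adj G i j}"

definition num_edges :: "graph \<Rightarrow> nat" where
  "num_edges G = card {(i, j). i < j \<and> j < gorder G \<and> adj G i j}"

definition laplacian :: "graph \<Rightarrow> real mat" where
  "laplacian G = mat (gorder G) (gorder G) (\<lambda>(i, j).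
     (if i = j then real (degree G i) else 0) - (if adj G i j then 1 else 0))"

text \<open>Laplacian spectrum as a multiset: roots of the characteristic polynomial,
  with multiplicity (L is real symmetric, so its characteristic polynomial splits over the reals).\<close>
definition lap_spectrum :: "graph \<Rightarrow> real multiset" where
  "lap_spectrum G = proots (char_poly (laplacian G))"

definition avg_degree :: "graph \<Rightarrow> real" where
  "avg_degree G = 2 * real (num_edges G) / real (gorder G)"

definition lap_energy :: "graph \<Rightarrow> real" where
  "lap_energy G = (\<Sum>\<mu>\<in>#lap_spectrum G. \<bar>\<mu> - avg_degree G\<bar>)"

definition L_borderenergetic :: "graph \<Rightarrow> bool" where
  "L_borderenergetic G \<longleftrightarrow> lap_energy G = lap_energy (complete (gorder G))"

definition G_r :: "nat \<Rightarrow> graph" where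
  "G_r r = join (disj_union (complete 2) (empty_graph (2*r+1))) (empty_graph (2*r+1))"

definition G'_r :: "nat \<Rightarrow> graph" where
  "G'_r r = join (join (empty_graph (2*r+1)) (empty_graph (2*r+2))) (complete 1)"

end

theory Submission
  imports Defs
begin



lemma cpm_index:
  assumes "M \<in> carrier_mat n n" "a < n" "b < n"
  shows "char_poly_matrix M $$ (a,b) = (if a = b then [:0,1:] else 0) + [:- M $$ (a,b):]"
  using assms unfolding char_poly_matrix_def by auto

lemma cpm_dim[simp]: "dim_row (char_poly_matrix A) = dim_row A" "dim_col (char_poly_matrix A) = dim_col A"
  unfolding char_poly_matrix_def by auto

lemma twin:
  fixes M :: "real mat"
  assumes M: "M \<in> carrier_mat n n" and i: "i < n" and j: "j < n" and ij: "i \<noteq> j"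
    and rows: "\<And>k. k < n \<Longrightarrow> k \<noteq> i \<Longrightarrow> k \<noteq> j \<Longrightarrow> M $$ (i,k) = M $$ (j,k)"
    and l1: "M $$ (i,i) - M $$ (j,i) = l" and l2: "M $$ (j,j) - M $$ (i,j) = l"
  shows "char_poly M = [:-l,1:] * char_poly (mat_delete (addcol 1 j i M) i i)"
proof -
  let ?C = "char_poly_matrix M"
  let ?R = "addrow (-1) i j ?C"
  let ?C2 = "addcol 1 j i ?R"
  have C: "?C \<in> carrier_mat n n" using M by simp
  have dM: "dim_row M = n" "dim_col M = n" using carrier_matD[OF M] by auto
  have dC: "dim_row ?C = n" "dim_col ?C = n" by (simp_all add: dM)
  have R: "?R \<in> carrier_mat n n" by (rule carrier_matI, simp_all add: dM)
  have C2: "?C2 \<in> carrier_mat n n" by (rule carrier_matI, simp_all add: dM)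
  have MD: "mat_delete (addcol 1 j i M) i i \<in> carrier_mat (n-1) (n-1)"
    by (rule carrier_matI, simp_all add: dM)
  have dims: "dim_row ?C = n" "dim_col ?C = n" "dim_row ?R = n" "dim_col ?R = n" by (simp_all add: dM)
  have "char_poly M = det ?C" unfolding char_poly_def ..
  also have "\<dots> = det ?R" using det_addrow[OF j ij C] by simp
  also have "\<dots> = det ?C2" using det_addcol[OF i _ R, of j 1] ij by simp
  also have "\<dots> = (\<Sum>k<n. ?C2 $$ (i,k) * cofactor ?C2 i k)"
    by (rule laplace_expansion_row[OF C2 i])
  also have "\<dots> = ?C2 $$ (i,i) * cofactor ?C2 i i"
  proof -
    have z: "?C2 $$ (i,k) = 0" if "k < n" "k \<noteq> i" for k
      using that i j ij rows[of k] l1 l2 M by (auto simp: cpm_index dims)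
    have "(\<Sum>k<n. ?C2 $$ (i,k) * cofactor ?C2 i k) = ?C2 $$ (i,i) * cofactor ?C2 i i
        + (\<Sum>k\<in>{..<n}-{i}. ?C2 $$ (i,k) * cofactor ?C2 i k)"
      using i by (subst sum.remove[of _ i]) auto
    also have "(\<Sum>k\<in>{..<n}-{i}. ?C2 $$ (i,k) * cofactor ?C2 i k) = 0"
      using z by (intro sum.neutral) auto
    finally show ?thesis by simp
  qed
  also have "?C2 $$ (i,i) = [:-l,1:]"
    using i j ij l1 l2 M by (auto simp: cpm_index dims)
  also have "cofactor ?C2 i i = det (mat_delete ?C2 i i)"
    unfolding cofactor_def by simp
  also have "mat_delete ?C2 i i = char_poly_matrix (mat_delete (addcol 1 j i M) i i)"
  proof (rule eq_matI)
    fix a b assume ab: "a < dim_row (char_poly_matrix (mat_delete (addcol 1 j i M) i i))"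
       "b < dim_col (char_poly_matrix (mat_delete (addcol 1 j i M) i i))"
    hence a: "a < n - 1" and b: "b < n - 1" using M by auto
    define a' where "a' = (if a < i then a else Suc a)"
    define b' where "b' = (if b < i then b else Suc b)"
    have a': "a' < n" "a' \<noteq> i" and b': "b' < n" "b' \<noteq> i" using a b i unfolding a'_def b'_def by auto
    have eq: "(a' = b') = (a = b)" unfolding a'_def b'_def by auto
    have "mat_delete ?C2 i i $$ (a,b) = ?C2 $$ (a',b')"
      using a b M unfolding mat_delete_def a'_def b'_def by auto
    also have "\<dots> = (if a' = b' then [:0,1:] else 0) + [:- (if b' = j then M $$ (a',i) + M $$ (a',b') else M $$ (a',b')):]"
      using a' b' i j ij M by (simp add: dims cpm_index)
    also have "M' $$ (a,b) = (if b' = j then M $$ (a',i) + M $$ (a',b') else M $$ (a',b'))"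
      if "M' = mat_delete (addcol 1 j i M) i i" for M'
      using a b M unfolding that mat_delete_def a'_def b'_def by auto
    hence "(if a' = b' then [:0,1:] else 0) + [:- (if b' = j then M $$ (a',i) + M $$ (a',b') else M $$ (a',b')):]
       = char_poly_matrix (mat_delete (addcol 1 j i M) i i) $$ (a,b)"
      by (subst cpm_index[OF MD a b]) (simp add: eq)
    finally show "mat_delete ?C2 i i $$ (a,b) = char_poly_matrix (mat_delete (addcol 1 j i M) i i) $$ (a,b)" .
  qed (insert M, auto)
  finally show ?thesis unfolding char_poly_def .
qed

definition gmat :: "nat \<Rightarrow> (nat \<Rightarrow> nat) \<Rightarrow> (nat \<Rightarrow> real) \<Rightarrow> (nat \<Rightarrow> nat \<Rightarrow> real) \<Rightarrow> (nat \<Rightarrow> real) \<Rightarrow> real mat" where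
  "gmat n cl d B w = mat n n (\<lambda>(i,j). (if i = j then d (cl i) else 0) + w j * B (cl i) (cl j))"

lemma gmat_carrier: "gmat n cl d B w \<in> carrier_mat n n" unfolding gmat_def by simp

lemma gmat_dim[simp]: "dim_row (gmat n cl d B w) = n" "dim_col (gmat n cl d B w) = n"
  unfolding gmat_def by simp_all

lemma gmat_index: "i < n \<Longrightarrow> j < n \<Longrightarrow> gmat n cl d B w $$ (i,j) = (if i = j then d (cl i) else 0) + w j * B (cl i) (cl j)"
  unfolding gmat_def by simp

lemma twin_gmat:
  assumes i: "i < n" and j: "j < n" and ij: "i \<noteq> j" and c: "cl i = cl j"
  shows "char_poly (gmat n cl d B w) = [:-d (cl i),1:] *
     char_poly (gmat (n-1) (\<lambda>k. cl (if k < i then k else Suc k)) d B (\<lambda>k. (w(j := w j + w i)) (if k < i then k else Suc k)))"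
proof -
  have E1: "char_poly (gmat n cl d B w) = [:-d (cl i),1:] * char_poly (mat_delete (addcol 1 j i (gmat n cl d B w)) i i)"
    by (rule twin[OF gmat_carrier i j ij], insert i j ij c, auto simp: gmat_index)
  have E2: "mat_delete (addcol 1 j i (gmat n cl d B w)) i i = gmat (n-1) (\<lambda>k. cl (if k < i then k else Suc k)) d B (\<lambda>k. (w(j := w j + w i)) (if k < i then k else Suc k))"
  proof (rule eq_matI)
    fix a b assume "a < dim_row (gmat (n - 1) (\<lambda>k. cl (if k < i then k else Suc k)) d B (\<lambda>k. (w(j := w j + w i)) (if k < i then k else Suc k)))"
      "b < dim_col (gmat (n - 1) (\<lambda>k. cl (if k < i then k else Suc k)) d B (\<lambda>k. (w(j := w j + w i)) (if k < i then k else Suc k)))"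
    hence a: "a < n - 1" and b: "b < n - 1" unfolding gmat_def by auto
    define a' where "a' = (if a < i then a else Suc a)"
    define b' where "b' = (if b < i then b else Suc b)"
    have a': "a' < n" "a' \<noteq> i" and b': "b' < n" "b' \<noteq> i" using a b i unfolding a'_def b'_def by auto
    have eq: "(a' = b') = (a = b)" unfolding a'_def b'_def by auto
    have dd: "dim_row (gmat n cl d B w) = n" "dim_col (gmat n cl d B w) = n" unfolding gmat_def by auto
    have "mat_delete (addcol 1 j i (gmat n cl d B w)) i i $$ (a,b) = addcol 1 j i (gmat n cl d B w) $$ (a',b')"
      using a b unfolding mat_delete_def a'_def b'_def by (auto simp: dd)
    also have "\<dots> = (if a' = b' then d (cl a') else 0) + (w(j := w j + w i)) b' * B (cl a') (cl b')"
      using a' b' i j ij c by (auto simp: dd gmat_index algebra_simps)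
    also have "\<dots> = gmat (n - 1) (\<lambda>k. cl (if k < i then k else Suc k)) d B (\<lambda>k. (w(j := w j + w i)) (if k < i then k else Suc k)) $$ (a,b)"
      using a b by (simp add: gmat_index eq a'_def b'_def)
    finally show "mat_delete (addcol 1 j i (gmat n cl d B w)) i i $$ (a,b) = gmat (n - 1) (\<lambda>k. cl (if k < i then k else Suc k)) d B (\<lambda>k. (w(j := w j + w i)) (if k < i then k else Suc k)) $$ (a,b)" .
  qed (simp_all add: gmat_dim)
  show ?thesis by (simp only: E1 E2)
qed

lemma collapse:
  assumes "a + k < n" "\<forall>t. a \<le> t \<and> t \<le> a+k \<longrightarrow> cl t = cl a" "\<forall>t. a < t \<and> t \<le> a+k \<longrightarrow> w t = 1"
  shows "char_poly (gmat n cl d B w) = [:-d (cl a),1:]^k *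
    char_poly (gmat (n-k) (\<lambda>t. cl (if t \<le> a then t else t+k)) d B
       (\<lambda>t. if t = a then w a + real k else w (if t \<le> a then t else t+k)))"
  using assms
proof (induction k arbitrary: n cl w)
  case 0
  have e1: "(\<lambda>t. cl (if t \<le> a then t else t + 0)) = cl" by auto
  have e2: "(\<lambda>t. if t = a then w a + real 0 else w (if t \<le> a then t else t + 0)) = w" by auto
  show ?case by (subst e1, subst e2, simp only: power_0 mult.left_neutral diff_zero)
next
  case (Suc k)
  have c: "cl (a+1) = cl a" using Suc.prems(2)[rule_format, of "a+1"] by simp
  have w1: "w (a+1) = 1" using Suc.prems(3)[rule_format, of "a+1"] by simp
  define cl1 where "cl1 = (\<lambda>t. cl (if t < a+1 then t else Suc t))"
  define w1f where "w1f = (\<lambda>t. (w(a := w a + w (a+1))) (if t < a+1 then t else Suc t))"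
  have A: "char_poly (gmat n cl d B w) = [:-d (cl a),1:] * char_poly (gmat (n-1) cl1 d B w1f)"
    unfolding cl1_def w1f_def using twin_gmat[of "a+1" n a cl d B w] Suc.prems(1) c by simp
  have P2: "\<forall>t. a \<le> t \<and> t \<le> a+k \<longrightarrow> cl1 t = cl1 a"
  proof (intro allI impI)
    fix t assume t: "a \<le> t \<and> t \<le> a+k"
    show "cl1 t = cl1 a"
      using Suc.prems(2)[rule_format, of t] Suc.prems(2)[rule_format, of "Suc t"] t unfolding cl1_def by simp
  qed
  have P3: "\<forall>t. a < t \<and> t \<le> a+k \<longrightarrow> w1f t = 1"
  proof (intro allI impI)
    fix t assume t: "a < t \<and> t \<le> a+k"
    show "w1f t = 1"
      using Suc.prems(3)[rule_format, of "Suc t"] t unfolding w1f_def by simp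
  qed
  have P1: "a + k < n - 1" using Suc.prems(1) by simp
  have B: "char_poly (gmat (n-1) cl1 d B w1f) = [:-d (cl1 a),1:]^k * char_poly (gmat (n-1-k) (\<lambda>t. cl1 (if t \<le> a then t else t+k)) d B
       (\<lambda>t. if t = a then w1f a + real k else w1f (if t \<le> a then t else t+k)))"
    by (rule Suc.IH[OF P1 P2 P3])
  have C0: "cl1 a = cl a" unfolding cl1_def by simp
  have C1: "(\<lambda>t. cl1 (if t \<le> a then t else t+k)) = (\<lambda>t. cl (if t \<le> a then t else t + Suc k))"
    by (rule ext, auto simp: cl1_def)
  have C2: "(\<lambda>t. if t = a then w1f a + real k else w1f (if t \<le> a then t else t+k)) = (\<lambda>t. if t = a then w a + real (Suc k) else w (if t \<le> a then t else t + Suc k))"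
    using w1 by (intro ext, auto simp: w1f_def)
  have n: "n - 1 - k = n - Suc k" by simp
  show ?case unfolding A B C0 C1 C2 n power_Suc by (simp only: mult.assoc)
qed



lemma det2: assumes A: "(A :: 'a :: comm_ring_1 mat) \<in> carrier_mat 2 2"
  shows "det A = A$$(0,0)*A$$(1,1) - A$$(0,1)*A$$(1,0)"
proof -
  have dA: "dim_row A = 2" "dim_col A = 2" using carrier_matD[OF A] by auto
  have c1: "mat_delete A 0 j \<in> carrier_mat 1 1" for j by (rule carrier_matI, simp_all add: dA)
  have "det A = (\<Sum>j<2. A $$ (0,j) * cofactor A 0 j)" by (rule laplace_expansion_row[OF A], simp)
  also have "\<dots> = A $$ (0,0) * cofactor A 0 0 + A $$ (0,1) * cofactor A 0 1"
    by (simp add: numeral_2_eq_2)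
  also have "cofactor A 0 0 = A $$ (1,1)"
    unfolding cofactor_def det_single[OF c1] by (simp add: mat_delete_def dA)
  also have "cofactor A 0 1 = - A $$ (1,0)"
    unfolding cofactor_def det_single[OF c1] by (simp add: mat_delete_def dA)
  finally show ?thesis by (simp add: algebra_simps)
qed

lemma det3: assumes A: "(A :: 'a :: comm_ring_1 mat) \<in> carrier_mat 3 3"
  shows "det A = A$$(0,0)*(A$$(1,1)*A$$(2,2) - A$$(1,2)*A$$(2,1))
               - A$$(0,1)*(A$$(1,0)*A$$(2,2) - A$$(1,2)*A$$(2,0))
               + A$$(0,2)*(A$$(1,0)*A$$(2,1) - A$$(1,1)*A$$(2,0))"
proof -
  have dA: "dim_row A = 3" "dim_col A = 3" using carrier_matD[OF A] by auto
  have c1: "mat_delete A 0 j \<in> carrier_mat 2 2" for j by (rule carrier_matI, simp_all add: dA)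
  have "det A = (\<Sum>j<3. A $$ (0,j) * cofactor A 0 j)" by (rule laplace_expansion_row[OF A], simp)
  also have "\<dots> = A $$ (0,0) * cofactor A 0 0 + A $$ (0,1) * cofactor A 0 1 + A $$ (0,2) * cofactor A 0 2"
    by (simp add: numeral_3_eq_3 numeral_2_eq_2)
  also have "cofactor A 0 0 = A$$(1,1)*A$$(2,2) - A$$(1,2)*A$$(2,1)"
    unfolding cofactor_def det2[OF c1] by (simp add: mat_delete_def dA numeral_2_eq_2)
  also have "cofactor A 0 1 = - (A$$(1,0)*A$$(2,2) - A$$(1,2)*A$$(2,0))"
    unfolding cofactor_def det2[OF c1] by (simp add: mat_delete_def dA numeral_2_eq_2)
  also have "cofactor A 0 2 = A$$(1,0)*A$$(2,1) - A$$(1,1)*A$$(2,0)"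
    unfolding cofactor_def det2[OF c1] by (simp add: mat_delete_def dA numeral_2_eq_2)
  finally show ?thesis by (simp add: algebra_simps)
qed

lemma char_poly_gmat3:
  "char_poly (gmat 3 cl d B w) = 
    (let m = \<lambda>i j. (if i = j then [:0,1:] else 0) + [:- ((if i = j then d (cl i) else 0) + w j * B (cl i) (cl j)):] in
      m 0 0*(m 1 1*m 2 2 - m 1 2*m 2 1) - m 0 1*(m 1 0*m 2 2 - m 1 2*m 2 0) + m 0 2*(m 1 0*m 2 1 - m 1 1*m 2 0))"
  unfolding char_poly_def Let_def
  by (subst det3, simp add: gmat_carrier, simp add: cpm_index[OF gmat_carrier] gmat_index)

lemma char_poly_gmat1:
  "char_poly (gmat 1 cl d B w) = [:- (d (cl 0) + w 0 * B (cl 0) (cl 0)), 1:]"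
  unfolding char_poly_def
  by (subst det_single, simp add: gmat_carrier, simp add: cpm_index[OF gmat_carrier] gmat_index)

lemma gmat_cong: "(\<And>t. t < n \<Longrightarrow> cl t = cl' t) \<Longrightarrow> (\<And>t. t < n \<Longrightarrow> w t = w' t) \<Longrightarrow>
   gmat n cl d B w = gmat n cl' d B w'"
  by (rule eq_matI, auto simp: gmat_index)




lemma lap_gmat:
  assumes n: "gorder G = n"
    and adjB: "\<And>i j. i < n \<Longrightarrow> j < n \<Longrightarrow> i \<noteq> j \<Longrightarrow> B (cl i) (cl j) = (if adj G i j then -1 else 0)"
    and deg: "\<And>i. i < n \<Longrightarrow> real (degree G i) = d (cl i) + B (cl i) (cl i)"
  shows "laplacian G = gmat n cl d B (\<lambda>_. 1)"
proof (rule eq_matI)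
  fix i j assume "i < dim_row (gmat n cl d B (\<lambda>_. 1))" "j < dim_col (gmat n cl d B (\<lambda>_. 1))"
  hence i: "i < n" and j: "j < n" by auto
  show "laplacian G $$ (i,j) = gmat n cl d B (\<lambda>_. 1) $$ (i,j)"
  proof (cases "i = j")
    case True
    have "\<not> adj G i i" unfolding adj_def by simp
    thus ?thesis using True i deg[OF i] n unfolding laplacian_def by (simp add: gmat_index)
  next
    case False
    thus ?thesis using i j adjB[OF i j False] n unfolding laplacian_def by (simp add: gmat_index)
  qed
qed (auto simp: laplacian_def n)

lemma gorder_G_r: "gorder (G_r r) = 4*r+4"
  unfolding G_r_def join_def disj_union_def complete_def empty_graph_def gorder_def by simp

lemma adj_G_r: "adj (G_r r) i j \<longleftrightarrow> i < 4*r+4 \<and> j < 4*r+4 \<and> i \<noteq> j \<and>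
   ((i < 2 \<and> j < 2) \<or> (i < 2*r+3 \<and> 2*r+3 \<le> j) \<or> (2*r+3 \<le> i \<and> j < 2*r+3))"
  unfolding G_r_def join_def disj_union_def complete_def empty_graph_def gorder_def adj_def
  by auto

definition clG :: "nat \<Rightarrow> nat \<Rightarrow> nat" where
  "clG r t = (if t < 2 then 0 else if t < 2*r+3 then 1 else 2)"
definition dG :: "nat \<Rightarrow> nat \<Rightarrow> real" where
  "dG r c = (if c = 0 then 2*r+3 else if c = 1 then 2*r+1 else 2*r+3)"
definition BG :: "nat \<Rightarrow> nat \<Rightarrow> real" where
  "BG c c' = (if c = 0 \<and> c' = 0 then -1 else if (c = 2) \<noteq> (c' = 2) then -1 else 0)"

lemma degree_G_r:
  assumes i: "i < 4*r+4"
  shows "real (degree (G_r r) i) = dG r (clG r i) + BG (clG r i) (clG r i)"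
proof -
  consider "i < 2" | "2 \<le> i" "i < 2*r+3" | "2*r+3 \<le> i" by linarith
  thus ?thesis
  proof cases
    case 1
    have "{j. j < gorder (G_r r) \<and> adj (G_r r) i j} = {1-i} \<union> {2*r+3..<4*r+4}"
      using 1 unfolding gorder_G_r adj_G_r by (auto, arith)
    moreover have "card ({1-i} \<union> {2*r+3..<4*r+4}) = 2*r+2" using 1 by (subst card_Un_disjoint) auto
    ultimately show ?thesis using 1 unfolding degree_def dG_def BG_def clG_def by simp
  next
    case 2
    have "{j. j < gorder (G_r r) \<and> adj (G_r r) i j} = {2*r+3..<4*r+4}"
      using 2 unfolding gorder_G_r adj_G_r by auto
    thus ?thesis using 2 unfolding degree_def dG_def BG_def clG_def by simp
  next
    case 3
    have "{j. j < gorder (G_r r) \<and> adj (G_r r) i j} = {0..<2*r+3}"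
      using 3 i unfolding gorder_G_r adj_G_r by auto
    thus ?thesis using 3 unfolding degree_def dG_def BG_def clG_def by simp
  qed
qed

lemma lap_G_r: "laplacian (G_r r) = gmat (4*r+4) (clG r) (dG r) BG (\<lambda>_. 1)"
proof (rule lap_gmat[OF gorder_G_r])
  fix i j assume "i < 4*r+4" "j < 4*r+4" "i \<noteq> j"
  thus "BG (clG r i) (clG r j) = (if adj (G_r r) i j then -1 else 0)"
    unfolding adj_G_r BG_def clG_def by auto
qed (rule degree_G_r)




lemma collapse2:
  assumes "a + k < n" "\<forall>t. a \<le> t \<and> t \<le> a+k \<longrightarrow> cl t = cl a" "\<forall>t. a < t \<and> t \<le> a+k \<longrightarrow> w t = 1"
    "n' = n - k"
    "\<And>t. t < n' \<Longrightarrow> cl (if t \<le> a then t else t+k) = cl' t"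
    "\<And>t. t < n' \<Longrightarrow> (if t = a then w a + real k else w (if t \<le> a then t else t+k)) = w' t"
    "c = d (cl a)"
  shows "char_poly (gmat n cl d B w) = [:-c,1:]^k * char_poly (gmat n' cl' d B w')"
proof -
  have "char_poly (gmat n cl d B w) = [:-d (cl a),1:]^k *
    char_poly (gmat (n-k) (\<lambda>t. cl (if t \<le> a then t else t+k)) d B
       (\<lambda>t. if t = a then w a + real k else w (if t \<le> a then t else t+k)))"
    by (rule collapse[OF assms(1-3)])
  also have "gmat (n-k) (\<lambda>t. cl (if t \<le> a then t else t+k)) d B
       (\<lambda>t. if t = a then w a + real k else w (if t \<le> a then t else t+k)) = gmat n' cl' d B w'"
    unfolding assms(4)[symmetric] by (rule gmat_cong, insert assms(5,6), auto)
  finally show ?thesis using assms(7) by simp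
qed

lemma cp_G_r: "char_poly (laplacian (G_r r)) =
   [:-(2*real r+3),1:] * ([:-(2*real r+1),1:]^(2*r) * ([:-(2*real r+3),1:]^(2*r) *
     ([:0,1:] * [:-(2*real r+1),1:] * [:-(4*real r+4),1:])))"
proof -
  let ?c1 = "\<lambda>t::nat. (if t < 1 then 0 else if t < 2*r+2 then 1 else 2::nat)"
  let ?w1 = "\<lambda>t::nat. (if t = 0 then 2 else 1::real)"
  let ?c2 = "\<lambda>t::nat. (if t < 1 then 0 else if t < 2 then 1 else 2::nat)"
  let ?w2 = "\<lambda>t::nat. (if t = 0 then 2 else if t = 1 then 2*r+1 else 1::real)"
  let ?w3 = "\<lambda>t::nat. (if t = 0 then 2 else 2*r+1::real)"
  have s1: "char_poly (gmat (4*r+4) (clG r) (dG r) BG (\<lambda>_. 1)) = [:-(2*real r+3),1:]^1 * char_poly (gmat (4*r+3) ?c1 (dG r) BG ?w1)"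
    by (rule collapse2[where a=0], auto simp: clG_def dG_def)
  have s2: "char_poly (gmat (4*r+3) ?c1 (dG r) BG ?w1) = [:-(2*real r+1),1:]^(2*r) * char_poly (gmat (2*r+3) ?c2 (dG r) BG ?w2)"
    by (rule collapse2[where a=1], auto simp: dG_def)
  have s3: "char_poly (gmat (2*r+3) ?c2 (dG r) BG ?w2) = [:-(2*real r+3),1:]^(2*r) * char_poly (gmat 3 ?c2 (dG r) BG ?w3)"
    by (rule collapse2[where a=2], auto simp: dG_def)
  have s4: "char_poly (gmat 3 ?c2 (dG r) BG ?w3) = [:0,1:] * [:-(2*real r+1),1:] * [:-(4*real r+4),1:]"
    unfolding char_poly_gmat3 Let_def poly_eq_poly_eq_iff[symmetric]
    by (rule ext, simp add: dG_def BG_def algebra_simps)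
  show ?thesis unfolding lap_G_r s1 s2 s3 s4 by (simp only: power_one_right)
qed




lemma gorder_G'_r: "gorder (G'_r r) = 4*r+4"
  unfolding G'_r_def join_def complete_def empty_graph_def gorder_def by simp

definition clP :: "nat \<Rightarrow> nat \<Rightarrow> nat" where
  "clP r t = (if t < 2*r+1 then 0 else if t < 4*r+3 then 1 else 2)"
definition dP :: "nat \<Rightarrow> nat \<Rightarrow> real" where
  "dP r c = (if c = 0 then 2*r+3 else if c = 1 then 2*r+2 else 4*r+3)"
definition BP :: "nat \<Rightarrow> nat \<Rightarrow> real" where
  "BP c c' = (if c = c' then 0 else -1)"

lemma adj_G'_r: "adj (G'_r r) i j \<longleftrightarrow> i < 4*r+4 \<and> j < 4*r+4 \<and> i \<noteq> j \<and> clP r i \<noteq> clP r j"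
  unfolding G'_r_def join_def complete_def empty_graph_def gorder_def adj_def clP_def
  by auto

lemma degree_G'_r:
  assumes i: "i < 4*r+4"
  shows "real (degree (G'_r r) i) = dP r (clP r i) + BP (clP r i) (clP r i)"
proof -
  consider "i < 2*r+1" | "2*r+1 \<le> i" "i < 4*r+3" | "i = 4*r+3" using i by linarith
  thus ?thesis
  proof cases
    case 1
    have "{j. j < gorder (G'_r r) \<and> adj (G'_r r) i j} = {2*r+1..<4*r+4}"
      using 1 unfolding gorder_G'_r adj_G'_r clP_def by auto
    thus ?thesis using 1 unfolding degree_def dP_def BP_def clP_def by simp
  next
    case 2
    have "{j. j < gorder (G'_r r) \<and> adj (G'_r r) i j} = {0..<2*r+1} \<union> {4*r+3}"
      using 2 unfolding gorder_G'_r adj_G'_r clP_def by auto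
    moreover have "card ({0..<2*r+1} \<union> {4*r+3}) = 2*r+2" by (subst card_Un_disjoint) auto
    ultimately show ?thesis using 2 unfolding degree_def dP_def BP_def clP_def by simp
  next
    case 3
    have "{j. j < gorder (G'_r r) \<and> adj (G'_r r) i j} = {0..<4*r+3}"
      using 3 unfolding gorder_G'_r adj_G'_r clP_def by auto
    thus ?thesis using 3 unfolding degree_def dP_def BP_def clP_def by simp
  qed
qed

lemma lap_G'_r: "laplacian (G'_r r) = gmat (4*r+4) (clP r) (dP r) BP (\<lambda>_. 1)"
proof (rule lap_gmat[OF gorder_G'_r])
  fix i j assume "i < 4*r+4" "j < 4*r+4" "i \<noteq> j"
  thus "BP (clP r i) (clP r j) = (if adj (G'_r r) i j then -1 else 0)"
    unfolding adj_G'_r BP_def by auto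
qed (rule degree_G'_r)

lemma cp_G'_r: "char_poly (laplacian (G'_r r)) =
   [:-(2*real r+3),1:]^(2*r) * ([:-(2*real r+2),1:]^(2*r+1) *
     ([:0,1:] * [:-(4*real r+4),1:] * [:-(4*real r+4),1:]))"
proof -
  let ?c1 = "\<lambda>t::nat. (if t < 1 then 0 else if t < 2*r+3 then 1 else 2::nat)"
  let ?w1 = "\<lambda>t::nat. (if t = 0 then 2*r+1 else 1::real)"
  let ?c2 = "\<lambda>t::nat. (if t < 1 then 0 else if t < 2 then 1 else 2::nat)"
  let ?w2 = "\<lambda>t::nat. (if t = 0 then 2*r+1 else if t = 1 then 2*r+2 else 1::real)"
  have s1: "char_poly (gmat (4*r+4) (clP r) (dP r) BP (\<lambda>_. 1)) = [:-(2*real r+3),1:]^(2*r) * char_poly (gmat (2*r+4) ?c1 (dP r) BP ?w1)"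
    by (rule collapse2[where a=0], auto simp: clP_def dP_def)
  have s2: "char_poly (gmat (2*r+4) ?c1 (dP r) BP ?w1) = [:-(2*real r+2),1:]^(2*r+1) * char_poly (gmat 3 ?c2 (dP r) BP ?w2)"
    by (rule collapse2[where a=1], auto simp: dP_def)
  have s4: "char_poly (gmat 3 ?c2 (dP r) BP ?w2) = [:0,1:] * [:-(4*real r+4),1:] * [:-(4*real r+4),1:]"
    unfolding char_poly_gmat3 Let_def poly_eq_poly_eq_iff[symmetric]
    by (rule ext, simp add: dP_def BP_def algebra_simps)
  show ?thesis unfolding lap_G'_r s1 s2 s4 by (simp only: power_one_right)
qed

lemma adj_complete: "adj (complete m) i j \<longleftrightarrow> i < m \<and> j < m \<and> i \<noteq> j"
  unfolding complete_def adj_def by auto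

lemma gorder_complete: "gorder (complete m) = m" unfolding complete_def gorder_def by simp

lemma lap_complete: assumes m: "m \<ge> 1"
  shows "laplacian (complete m) = gmat m (\<lambda>_. 0) (\<lambda>_. real m) (\<lambda>_ _. -1) (\<lambda>_. 1)"
proof (rule lap_gmat[OF gorder_complete])
  fix i j assume "i < m" "j < m" "i \<noteq> j"
  thus "(-1::real) = (if adj (complete m) i j then -1 else 0)" unfolding adj_complete by auto
next
  fix i assume i: "i < m"
  have "{j. j < gorder (complete m) \<and> adj (complete m) i j} = {0..<m} - {i}"
    using i unfolding gorder_complete adj_complete by auto
  hence "degree (complete m) i = m - 1" using i unfolding degree_def by simp
  thus "real (degree (complete m) i) = real m + -1" using m by simp
qed

lemma cp_complete: assumes m: "m \<ge> 1"
  shows "char_poly (laplacian (complete m)) = [:-(real m),1:]^(m-1) * [:0,1:]"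
proof -
  have s1: "char_poly (gmat m (\<lambda>_. 0) (\<lambda>_. real m) (\<lambda>_ _. -1) (\<lambda>_. 1)) =
     [:-(real m),1:]^(m-1) * char_poly (gmat 1 (\<lambda>_. 0) (\<lambda>_. real m) (\<lambda>_ _. -1) (\<lambda>_. real m))"
    by (rule collapse2[where a=0], insert m, auto)
  have s2: "char_poly (gmat 1 (\<lambda>_. 0) (\<lambda>_. real m) (\<lambda>_ _. -1) (\<lambda>_. real m)) = [:0,1:]"
    unfolding char_poly_gmat1 by simp
  show ?thesis unfolding lap_complete[OF m] s1 s2 ..
qed

lemma edges_complete: "2 * num_edges (complete m) = m * (m - 1)"
proof -
  have "{(i, j). i < j \<and> j < gorder (complete m) \<and> adj (complete m) i j} = {(i,j). i < j \<and> j < m}"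
    unfolding gorder_complete adj_complete by auto
  moreover have "2 * card {(i,j). i < j \<and> j < (m::nat)} = m * (m - 1)"
  proof (induction m)
    case 0 thus ?case by simp
  next
    case (Suc m)
    have e: "{(i,j). i < j \<and> j < Suc m} = {(i,j). i < j \<and> j < m} \<union> (\<lambda>i. (i, m)) ` {0..<m}" by auto
    have f: "finite {(i,j). i < j \<and> j < (m::nat)}"
      by (rule finite_subset[of _ "{0..<m} \<times> {0..<m}"]) auto
    have "card {(i,j). i < j \<and> j < Suc m} = card {(i,j). i < j \<and> j < m} + m"
      unfolding e by (subst card_Un_disjoint[OF f]) (auto simp: card_image inj_on_def)
    thus ?case using Suc.IH by (cases m) (auto simp: algebra_simps)
  qed
  ultimately show ?thesis unfolding num_edges_def by simp
qed

lemma edges_G_r: "num_edges (G_r r) = 1 + (2*r+3)*(2*r+1)"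
proof -
  have "{(i, j). i < j \<and> j < gorder (G_r r) \<and> adj (G_r r) i j} = {(0,1)} \<union> ({0..<2*r+3} \<times> {2*r+3..<4*r+4})"
    unfolding gorder_G_r adj_G_r by auto
  moreover have "card ({(0::nat,1::nat)} \<union> ({0..<2*r+3} \<times> {2*r+3..<4*r+4})) = 1 + (2*r+3)*(2*r+1)"
    by (subst card_Un_disjoint) (auto simp: card_cartesian_product)
  ultimately show ?thesis unfolding num_edges_def by simp
qed

lemma edges_G'_r: "num_edges (G'_r r) = (2*r+1)*(2*r+3) + (2*r+2)"
proof -
  have "{(i, j). i < j \<and> j < gorder (G'_r r) \<and> adj (G'_r r) i j} = ({0..<2*r+1} \<times> {2*r+1..<4*r+4}) \<union> ({2*r+1..<4*r+3} \<times> {4*r+3})"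
    unfolding gorder_G'_r adj_G'_r clP_def by auto
  moreover have "card (({0..<2*r+1} \<times> {2*r+1..<4*r+4}) \<union> ({2*r+1..<4*r+3} \<times> {4*r+3::nat})) = (2*r+1)*(2*r+3) + (2*r+2)"
    by (subst card_Un_disjoint) (auto simp: card_cartesian_product)
  ultimately show ?thesis unfolding num_edges_def by simp
qed




lemma lin_ne0: "[:-a,1:] \<noteq> (0 :: real poly)" by simp

lemma X_ne0: "[:0,1:] \<noteq> (0 :: real poly)" by simp
lemma proots_X: "proots [:0,1:] = {#0::real#}" using proots_linear_factor[of "0::real"] by simp

lemma proots_lin_pow: "proots ([:-a,1:]^k) = replicate_mset k (a::real)"
  by (simp add: proots_power)

lemma spec_G_r: "lap_spectrum (G_r r) = {#2*real r+3#} + (replicate_mset (2*r) (2*real r+1) +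
   (replicate_mset (2*r) (2*real r+3) + ({#0#} + {#2*real r+1#} + {#4*real r+4#})))"
  unfolding lap_spectrum_def cp_G_r
  by (simp only: proots_mult mult_eq_0_iff power_eq_0_iff lin_ne0 X_ne0 proots_X proots_lin_pow proots_linear_factor
        minus_minus simp_thms, simp)

lemma spec_G'_r: "lap_spectrum (G'_r r) = replicate_mset (2*r) (2*real r+3) + (replicate_mset (2*r+1) (2*real r+2) +
   ({#0#} + {#4*real r+4#} + {#4*real r+4#}))"
  unfolding lap_spectrum_def cp_G'_r
  by (simp only: proots_mult mult_eq_0_iff power_eq_0_iff lin_ne0 X_ne0 proots_X proots_lin_pow proots_linear_factor
        minus_minus simp_thms, simp)

lemma spec_complete: "m \<ge> 1 \<Longrightarrow> lap_spectrum (complete m) = replicate_mset (m-1) (real m) + {#0#}"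
  unfolding lap_spectrum_def
  by (subst cp_complete, assumption, simp only: proots_mult mult_eq_0_iff power_eq_0_iff lin_ne0 X_ne0 proots_X proots_lin_pow proots_linear_factor
        minus_minus simp_thms, simp)

lemma avg_G_r: "avg_degree (G_r r) = 2*real r+2"
proof -
  have "real (num_edges (G_r r)) = 1 + (2*real r+3)*(2*real r+1)" unfolding edges_G_r by (simp add: algebra_simps)
  thus ?thesis unfolding avg_degree_def gorder_G_r by (simp add: field_simps)
qed

lemma avg_G'_r: "avg_degree (G'_r r) = 2*real r+3 - 1/(2*real r+2)"
proof -
  have "real (num_edges (G'_r r)) = (2*real r+1)*(2*real r+3) + (2*real r+2)" unfolding edges_G'_r by (simp add: algebra_simps)
  thus ?thesis unfolding avg_degree_def gorder_G'_r by (simp add: field_simps)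
qed

lemma avg_complete: assumes "m \<ge> 1" shows "avg_degree (complete m) = real m - 1"
proof -
  have "2 * real (num_edges (complete m)) = real m * (real m - 1)"
    using arg_cong[OF edges_complete[of m], of real] assms by (simp add: of_nat_diff)
  thus ?thesis using assms unfolding avg_degree_def gorder_complete by (simp add: field_simps)
qed

lemma LE_complete: assumes "m \<ge> 1" shows "lap_energy (complete m) = 2 * real m - 2"
  unfolding lap_energy_def spec_complete[OF assms] avg_complete[OF assms]
  using assms by (simp add: of_nat_diff algebra_simps)

lemma LE_G_r: "lap_energy (G_r r) = 8 * real r + 6"
  unfolding lap_energy_def spec_G_r avg_G_r by (simp add: algebra_simps)

lemma LE_G'_r: "lap_energy (G'_r r) = 8 * real r + 6"
proof -
  define e where "e = 1/(2*real r+2)"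
  have e0: "0 < e" "e \<le> 1" unfolding e_def by (auto simp: field_simps)
  have "lap_energy (G'_r r) = 2 * real r * \<bar>2*real r+3 - (2*real r+3 - e)\<bar> + (2 * real r + 1) * \<bar>2*real r+2 - (2*real r+3 - e)\<bar>
     + \<bar>0 - (2*real r+3 - e)\<bar> + 2 * \<bar>4*real r+4 - (2*real r+3 - e)\<bar>"
    unfolding lap_energy_def spec_G'_r avg_G'_r e_def[symmetric] by (simp add: algebra_simps)
  also have "\<dots> = 2 * real r * e + (2 * real r + 1) * (1 - e) + (2*real r+3 - e) + 2 * (2*real r+1+e)"
    using e0 by (simp add: abs_if)
  also have "\<dots> = 8 * real r + 6" by (simp add: algebra_simps)
  finally show ?thesis .
qed

theorem theorem4:
  fixes r :: nat
  assumes "r \<ge> 1"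
  shows "gorder (G_r r) = 4*r+4 \<and> gorder (G'_r r) = 4*r+4
    \<and> lap_energy (G_r r) = lap_energy (complete (4*r+4))
    \<and> lap_energy (G'_r r) = lap_energy (complete (4*r+4))
    \<and> lap_energy (complete (4*r+4)) = 8*r+6
    \<and> L_borderenergetic (G_r r) \<and> L_borderenergetic (G'_r r)
    \<and> lap_spectrum (G_r r) \<noteq> lap_spectrum (complete (4*r+4))
    \<and> lap_spectrum (G'_r r) \<noteq> lap_spectrum (complete (4*r+4))"
proof -
  have K: "lap_energy (complete (4*r+4)) = 8 * real r + 6"
    using LE_complete[of "4*r+4"] by simp
  have S1: "lap_spectrum (G_r r) \<noteq> lap_spectrum (complete (4*r+4))"
  proof
    assume eq: "lap_spectrum (G_r r) = lap_spectrum (complete (4*r+4))"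
    have "count (lap_spectrum (G_r r)) (2*real r+1) > 0" unfolding spec_G_r by simp
    moreover have "count (lap_spectrum (complete (4*r+4))) (2*real r+1) = 0"
      by (subst spec_complete) auto
    ultimately show False using eq by simp
  qed
  have S2: "lap_spectrum (G'_r r) \<noteq> lap_spectrum (complete (4*r+4))"
  proof
    assume eq: "lap_spectrum (G'_r r) = lap_spectrum (complete (4*r+4))"
    have "count (lap_spectrum (G'_r r)) (2*real r+2) > 0" unfolding spec_G'_r by simp
    moreover have "count (lap_spectrum (complete (4*r+4))) (2*real r+2) = 0"
      by (subst spec_complete) auto
    ultimately show False using eq by simp
  qed
  show ?thesis
    using K S1 S2 LE_G_r LE_G'_r gorder_G_r gorder_G'_r
    unfolding L_borderenergetic_def by simp
qed


end
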